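(* Let $G$ be a finite graph with at least one vertex and $\lambda>0$. Let $\mathbf{I}$ be an independent set drawn from the hard-core model at fugacity $\lambda$ on $G$. (i) For every $v\in V(G)$, writing $\mathbf{F}_v$ for the subgraph of $G$ induced by the neighbours of $v$ that are externally uncovered by $\mathbf{I}$, \[ \Pr(v\in\mathbf{I})\ge \frac{\lambda}{1+\lambda}(1+\lambda)^{-\mathbb{E}|V(\mathbf{F}_v)|}\,. \] (ii) Moreover, \[ \mathbb{E}|\mathbf{I}| \ge \frac{\lambda}{1+\lambda}|V(G)|(1+\lambda)^{-\frac{2|E(G)|}{|V(G)|}}\,. \]
   Context: For a graph $G$ with set $\mathcal{I}(G)$ of independent sets (including the empty set) and $\lambda>0$, the hard-core model on $G$ at fugacity $\lambda$ is the probability distribution on $\mathcal{I}(G)$ with $\Pr(\mathbf{I}=I)=\lambda^{|I|}/Z_G(\lambda)$, where $Z_G(\lambda)=\sum_{I\in\mathcal{I}(G)}\lambda^{|I|}$. Given $I\in\mathcal{I}(G)$ and $v\in V(G)$, a neighbour $u\in N(v)$ is externally uncovered by $I$ if $u\notin N(I\setminus N(v))$, i.e. $u$ has no neighbour in $I\setminus N(v)$. *)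

theory Defs
  imports Complex_Main
begin

definition simple_graph :: "'a set \<Rightarrow> ('a \<Rightarrow> 'a \<Rightarrow> bool) \<Rightarrow> bool" where
  "simple_graph V E \<longleftrightarrow> finite V \<and> (\<forall>u w. E u w \<longrightarrow> u \<in> V \<and> w \<in> V)
     \<and> (\<forall>u w. E u w \<longrightarrow> E w u) \<and> (\<forall>u. \<not> E u u)"

definition nbhd :: "'a set \<Rightarrow> ('a \<Rightarrow> 'a \<Rightarrow> bool) \<Rightarrow> 'a \<Rightarrow> 'a set" where
  "nbhd V E v = {u \<in> V. E v u}"

definition edge_set :: "'a set \<Rightarrow> ('a \<Rightarrow> 'a \<Rightarrow> bool) \<Rightarrow> 'a set set" where
  "edge_set V E = {{u, w} | u w. u \<in> V \<and> w \<in> V \<and> E u w}"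

definition indep_sets :: "'a set \<Rightarrow> ('a \<Rightarrow> 'a \<Rightarrow> bool) \<Rightarrow> 'a set set" where
  "indep_sets V E = {I. I \<subseteq> V \<and> (\<forall>u\<in>I. \<forall>w\<in>I. \<not> E u w)}"

definition Zhc :: "'a set \<Rightarrow> ('a \<Rightarrow> 'a \<Rightarrow> bool) \<Rightarrow> real \<Rightarrow> real" where
  "Zhc V E lam = (\<Sum>I\<in>indep_sets V E. lam ^ card I)"

definition hc_prob :: "'a set \<Rightarrow> ('a \<Rightarrow> 'a \<Rightarrow> bool) \<Rightarrow> real \<Rightarrow> 'a set \<Rightarrow> real" where
  "hc_prob V E lam I = lam ^ card I / Zhc V E lam"

definition hc_expect :: "'a set \<Rightarrow> ('a \<Rightarrow> 'a \<Rightarrow> bool) \<Rightarrow> real \<Rightarrow> ('a set \<Rightarrow> real) \<Rightarrow> real" where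
  "hc_expect V E lam f = (\<Sum>I\<in>indep_sets V E. hc_prob V E lam I * f I)"

text \<open>Neighbours of v externally uncovered by I: u in N(v) with no neighbour in I - N(v).
  This is the vertex set of the induced subgraph F_v.\<close>
definition ext_uncovered :: "'a set \<Rightarrow> ('a \<Rightarrow> 'a \<Rightarrow> bool) \<Rightarrow> 'a set \<Rightarrow> 'a \<Rightarrow> 'a set" where
  "ext_uncovered V E I v =
     {u \<in> nbhd V E v. \<not> (\<exists>w \<in> I - nbhd V E v. E u w)}"

end

theory Submission
  imports Defs
begin

lemma sum_Pow_pow:
  fixes lam :: real
  assumes "finite A"
  shows "(\<Sum>S\<in>Pow A. lam ^ card S) = (1 + lam) ^ card A"
  using assms
proof (induction A rule: finite_induct)
  case empty
  then show ?case by simp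
next
  case (insert x F)
  have disj: "Pow F \<inter> insert x ` Pow F = {}" using insert.hyps by auto
  have inj: "inj_on (insert x) (Pow F)" using insert.hyps
    by (smt (verit, del_insts) PowD inj_onI insert_ident subset_iff)
  have fin: "finite (Pow F)" using insert.hyps by simp
  have "(\<Sum>S\<in>Pow (insert x F). lam ^ card S)
      = (\<Sum>S\<in>Pow F. lam ^ card S) + (\<Sum>S\<in>insert x ` Pow F. lam ^ card S)"
    unfolding Pow_insert by (rule sum.union_disjoint) (use fin disj in auto)
  also have "(\<Sum>S\<in>insert x ` Pow F. lam ^ card S) = (\<Sum>S\<in>Pow F. lam ^ card (insert x S))"
    by (rule sum.reindex[OF inj, unfolded comp_def])
  also have "\<dots> = (\<Sum>S\<in>Pow F. lam * lam ^ card S)"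
  proof (rule sum.cong)
    fix S assume "S \<in> Pow F"
    then have "finite S" "x \<notin> S" using insert.hyps finite_subset by auto
    then show "lam ^ card (insert x S) = lam * lam ^ card S" by simp
  qed simp
  finally show ?case using insert by (simp add: sum_distrib_left[symmetric] algebra_simps)
qed

lemma jensen_powr:
  fixes b :: real and p x :: "'b \<Rightarrow> real"
  assumes "finite S" "\<And>i. i \<in> S \<Longrightarrow> p i \<ge> 0" "sum p S = 1" "b > 0"
  shows "(\<Sum>i\<in>S. p i * b powr (- x i)) \<ge> b powr (- (\<Sum>i\<in>S. p i * x i))"
proof -
  define m where "m = (\<Sum>i\<in>S. p i * x i)"
  have t: "b powr (- x i) \<ge> b powr (-m) * (1 - (x i - m) * ln b)" for i
  proof -
    have "b powr (- x i) = b powr (-m) * exp (- (x i - m) * ln b)"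
      using assms(4) by (simp add: powr_def exp_add[symmetric] algebra_simps)
    moreover have "exp (- (x i - m) * ln b) \<ge> 1 - (x i - m) * ln b"
    proof -
      have "1 + (- (x i - m) * ln b) \<le> exp (- (x i - m) * ln b)" by (rule exp_ge_add_one_self)
      then show ?thesis by linarith
    qed
    ultimately show ?thesis using assms(4)
      by (simp add: mult_left_mono)
  qed
  have "(\<Sum>i\<in>S. p i * b powr (- x i)) \<ge> (\<Sum>i\<in>S. p i * (b powr (-m) * (1 - (x i - m) * ln b)))"
    by (rule sum_mono) (use t assms(2) in \<open>simp add: mult_left_mono\<close>)
  moreover have "(\<Sum>i\<in>S. p i * (b powr (-m) * (1 - (x i - m) * ln b)))
     = b powr (-m) * (sum p S - ln b * ((\<Sum>i\<in>S. p i * x i) - m * sum p S))"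
    by (simp add: algebra_simps sum_distrib_left sum_distrib_right sum_subtractf sum.distrib)
  ultimately show ?thesis using assms(3) by (simp add: m_def)
qed


lemma fin_indep: "simple_graph V E \<Longrightarrow> finite (indep_sets V E)"
  unfolding simple_graph_def indep_sets_def
  by (rule finite_subset[of _ "Pow V"]) auto

lemma fin_indep_mem: "simple_graph V E \<Longrightarrow> I \<in> indep_sets V E \<Longrightarrow> finite I"
  unfolding simple_graph_def indep_sets_def using finite_subset by auto

lemma ext_unc_diff: "ext_uncovered V E (I - nbhd V E v) v = ext_uncovered V E I v"
  unfolding ext_uncovered_def by auto

lemma key_ineq:
  fixes lam :: real
  assumes sg: "simple_graph V E" and lam: "lam > 0"
  shows "(\<Sum>I\<in>indep_sets V E. lam ^ card I * (1+lam) powr (- real (card (ext_uncovered V E I v))))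
     \<le> (\<Sum>I\<in>{I\<in>indep_sets V E. I \<inter> nbhd V E v = {}}. lam ^ card I)"
proof -
  define N where "N = nbhd V E v"
  define X where "X = (\<lambda>K. ext_uncovered V E K v)"
  define A where "A = {I\<in>indep_sets V E. I \<inter> N = {}}"
  define h where "h = (\<lambda>I. (I - N, I \<inter> N))"
  define g where "g = (\<lambda>(K::'a set, S::'a set). lam ^ card K * lam ^ card S * (1+lam) powr (- real (card (X K))))"
  have finV: "finite V" using sg unfolding simple_graph_def by simp
  have finX: "finite (X K)" for K unfolding X_def ext_uncovered_def nbhd_def using finV by auto
  have finI: "finite (indep_sets V E)" using fin_indep[OF sg] .
  have finA: "finite A" unfolding A_def using finI by simp
  have inj: "inj_on h (indep_sets V E)"
    proof (rule inj_onI)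
    fix I J assume "h I = h J"
    then have "I - N = J - N" "I \<inter> N = J \<inter> N" unfolding h_def by auto
    then show "I = J" by blast
  qed
  have sub: "h ` indep_sets V E \<subseteq> Sigma A (\<lambda>K. Pow (X K))"
  proof
    fix p assume "p \<in> h ` indep_sets V E"
    then obtain I where I: "I \<in> indep_sets V E" and p: "p = (I - N, I \<inter> N)" unfolding h_def by auto
    have "I - N \<in> A" using I unfolding A_def indep_sets_def by auto
    moreover have "I \<inter> N \<subseteq> X (I - N)"
      using I unfolding X_def ext_uncovered_def indep_sets_def N_def by auto
    ultimately show "p \<in> Sigma A (\<lambda>K. Pow (X K))" using p by auto
  qed
  have "(\<Sum>I\<in>indep_sets V E. lam ^ card I * (1+lam) powr (- real (card (X I))))
      = (\<Sum>I\<in>indep_sets V E. g (h I))"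
  proof (rule sum.cong)
    fix I assume I: "I \<in> indep_sets V E"
    have fI: "finite I" using fin_indep_mem[OF sg I] .
    have "card I = card (I - N) + card (I \<inter> N)"
      proof -
      have "I = (I - N) \<union> (I \<inter> N)" by blast
      then have "card I = card ((I - N) \<union> (I \<inter> N))" by simp
      also have "\<dots> = card (I - N) + card (I \<inter> N)"
        by (rule card_Un_disjoint) (use fI in auto)
      finally show ?thesis .
    qed
    moreover have "X (I - N) = X I" unfolding X_def N_def by (rule ext_unc_diff)
    ultimately show "lam ^ card I * (1+lam) powr (- real (card (X I))) = g (h I)"
      unfolding g_def h_def by (simp add: power_add)
  qed simp
  also have "\<dots> = (\<Sum>p\<in>h ` indep_sets V E. g p)"
    by (rule sum.reindex[OF inj, unfolded comp_def, symmetric])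
  also have "\<dots> \<le> (\<Sum>p\<in>Sigma A (\<lambda>K. Pow (X K)). g p)"
    by (rule sum_mono2) (use finA finX sub lam in \<open>auto simp: g_def\<close>)
  also have "\<dots> = (\<Sum>(K,S)\<in>Sigma A (\<lambda>K. Pow (X K)). g (K, S))"
    by simp
  also have "\<dots> = (\<Sum>K\<in>A. \<Sum>S\<in>Pow (X K). g (K, S))"
    by (rule sum.Sigma[symmetric]) (use finA finX in auto)
  also have "\<dots> = (\<Sum>K\<in>A. lam ^ card K)"
  proof (rule sum.cong)
    fix K assume "K \<in> A"
    have "(\<Sum>S\<in>Pow (X K). g (K, S)) = lam ^ card K * (1+lam) powr (- real (card (X K))) * (\<Sum>S\<in>Pow (X K). lam ^ card S)"
      unfolding g_def by (simp add: sum_distrib_left sum_distrib_right mult_ac)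
    also have "\<dots> = lam ^ card K * ((1+lam) powr (- real (card (X K))) * (1+lam) ^ card (X K))"
      using sum_Pow_pow[OF finX] by simp
    also have "(1+lam) powr (- real (card (X K))) * (1+lam) ^ card (X K) = 1"
      using lam by (simp add: powr_minus powr_realpow[symmetric] field_simps)
    finally show "(\<Sum>S\<in>Pow (X K). g (K, S)) = lam ^ card K" by simp
  qed simp
  finally show ?thesis unfolding A_def X_def N_def .
qed


lemma insert_v_sum:
  fixes lam :: real
  assumes sg: "simple_graph V E" and v: "v \<in> V"
  shows "(\<Sum>I\<in>{I\<in>indep_sets V E. v \<in> I}. lam ^ card I)
       = lam * (\<Sum>I\<in>{I\<in>indep_sets V E. v \<notin> I \<and> I \<inter> nbhd V E v = {}}. lam ^ card I)"
proof -
  let ?B = "{I\<in>indep_sets V E. v \<notin> I \<and> I \<inter> nbhd V E v = {}}"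
  let ?C = "{I\<in>indep_sets V E. v \<in> I}"
  have sgd: "finite V" "\<And>u w. E u w \<Longrightarrow> u \<in> V \<and> w \<in> V" "\<And>u w. E u w \<Longrightarrow> E w u" "\<And>u. \<not> E u u"
    using sg unfolding simple_graph_def by auto
  have bij: "bij_betw (insert v) ?B ?C"
  proof (rule bij_betw_byWitness[where f' = "\<lambda>J. J - {v}"])
    show "\<forall>a\<in>?B. insert v a - {v} = a" by auto
    show "\<forall>a'\<in>?C. insert v (a' - {v}) = a'" by auto
    show "insert v ` ?B \<subseteq> ?C"
    proof
      fix J assume "J \<in> insert v ` ?B"
      then obtain I where I: "I \<in> ?B" and J: "J = insert v I" by blast
      have IV: "I \<subseteq> V" and Ii: "\<forall>u\<in>I. \<forall>w\<in>I. \<not> E u w" and IN: "I \<inter> nbhd V E v = {}"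
        using I unfolding indep_sets_def by auto
      have nv: "\<not> E v u" if "u \<in> I" for u
        using IN that IV unfolding nbhd_def by blast
      have "\<forall>u\<in>J. \<forall>w\<in>J. \<not> E u w"
        unfolding J using Ii nv sgd(3,4) by blast
      then show "J \<in> ?C" using IV v J unfolding indep_sets_def by auto
    qed
    show "(\<lambda>J. J - {v}) ` ?C \<subseteq> ?B"
    proof
      fix K assume "K \<in> (\<lambda>J. J - {v}) ` ?C"
      then obtain J where J: "J \<in> ?C" and K: "K = J - {v}" by blast
      have JV: "J \<subseteq> V" and Ji: "\<forall>u\<in>J. \<forall>w\<in>J. \<not> E u w" and vJ: "v \<in> J"
        using J unfolding indep_sets_def by auto
      have "K \<inter> nbhd V E v = {}" using Ji vJ unfolding K nbhd_def by blast
      moreover have "K \<in> indep_sets V E" using JV Ji unfolding K indep_sets_def by blast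
      ultimately show "K \<in> ?B" unfolding K by blast
    qed
  qed
  have "(\<Sum>I\<in>?C. lam ^ card I) = (\<Sum>I\<in>?B. lam ^ card (insert v I))"
    using sum.reindex_bij_betw[OF bij, of "\<lambda>I. lam ^ card I"] by simp
  also have "\<dots> = (\<Sum>I\<in>?B. lam * lam ^ card I)"
  proof (rule sum.cong)
    fix I assume I: "I \<in> ?B"
    then have "finite I" using fin_indep_mem[OF sg] by auto
    then show "lam ^ card (insert v I) = lam * lam ^ card I" using I by simp
  qed simp
  finally show ?thesis by (simp add: sum_distrib_left)
qed

lemma handshake:
  assumes sg: "simple_graph V E"
  shows "(\<Sum>v\<in>V. card (nbhd V E v)) \<le> 2 * card (edge_set V E)"
proof -
  have sgd: "finite V" "\<And>u w. E u w \<Longrightarrow> u \<in> V \<and> w \<in> V" "\<And>u w. E u w \<Longrightarrow> E w u" "\<And>u. \<not> E u u"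
    using sg unfolding simple_graph_def by auto
  define Q where "Q = (\<lambda>e::'a set. {(u,w). u \<in> e \<and> w \<in> e \<and> u \<noteq> w})"
  have finE: "finite (edge_set V E)"
    by (rule finite_subset[of _ "Pow V"]) (use sgd in \<open>auto simp: edge_set_def\<close>)
  have finN: "finite (nbhd V E v)" for v using sgd unfolding nbhd_def by auto
  have "(\<Sum>v\<in>V. card (nbhd V E v)) = card (Sigma V (nbhd V E))"
    by (rule card_SigmaI[symmetric]) (use sgd finN in auto)
  also have "\<dots> \<le> card (\<Union>e\<in>edge_set V E. Q e)"
  proof (rule card_mono)
    show "finite (\<Union>e\<in>edge_set V E. Q e)"
    proof (rule finite_UN_I[OF finE])
      fix e assume "e \<in> edge_set V E"
      then have "finite e" unfolding edge_set_def by auto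
      have "Q e \<subseteq> e \<times> e" unfolding Q_def by auto
      then show "finite (Q e)" using \<open>finite e\<close> finite_subset by blast
    qed
    show "Sigma V (nbhd V E) \<subseteq> (\<Union>e\<in>edge_set V E. Q e)"
    proof
      fix p assume "p \<in> Sigma V (nbhd V E)"
      then obtain u w where p: "p = (u,w)" "u \<in> V" "w \<in> V" "E u w" unfolding nbhd_def by auto
      then have "{u,w} \<in> edge_set V E" unfolding edge_set_def by auto
      moreover have "u \<noteq> w" using p(4) sgd(4) by metis
      then have "p \<in> Q {u,w}" unfolding Q_def p(1) by simp
      ultimately show "p \<in> (\<Union>e\<in>edge_set V E. Q e)" by blast
    qed
  qed
  also have "\<dots> \<le> (\<Sum>e\<in>edge_set V E. card (Q e))" by (rule card_UN_le[OF finE])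
  also have "\<dots> \<le> (\<Sum>e\<in>edge_set V E. 2)"
  proof (rule sum_mono)
    fix e assume "e \<in> edge_set V E"
    then obtain a b where e: "e = {a,b}" unfolding edge_set_def by auto
    have "Q e \<subseteq> {(a,b),(b,a)}" unfolding Q_def e by auto
    then have "card (Q e) \<le> card {(a,b),(b,a)}" by (rule card_mono[rotated]) simp
    also have "\<dots> \<le> 2" by (cases "a = b") auto
    finally show "card (Q e) \<le> 2" .
  qed
  finally show ?thesis by simp
qed


theorem lemma3p1:
  fixes V :: "'a set" and E :: "'a \<Rightarrow> 'a \<Rightarrow> bool" and lam :: real
  assumes "simple_graph V E" and "V \<noteq> {}" and "lam > 0"
  shows "(\<forall>v\<in>V. hc_expect V E lam (\<lambda>I. if v \<in> I then 1 else 0)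
            \<ge> lam / (1 + lam) *
              (1 + lam) powr (- hc_expect V E lam (\<lambda>I. real (card (ext_uncovered V E I v)))))
     \<and> hc_expect V E lam (\<lambda>I. real (card I))
            \<ge> lam / (1 + lam) * real (card V) *
              (1 + lam) powr (- (2 * real (card (edge_set V E)) / real (card V)))"
proof -
  note sg = assms(1) and lam = assms(3)
  have sgd: "finite V" "\<And>u w. E u w \<Longrightarrow> u \<in> V \<and> w \<in> V" "\<And>u w. E u w \<Longrightarrow> E w u" "\<And>u. \<not> E u u"
    using sg unfolding simple_graph_def by auto
  define ind where "ind = indep_sets V E"
  define Z where "Z = Zhc V E lam"
  define b where "b = 1 + lam"
  have b1: "b \<ge> 1" "b > 0" using lam unfolding b_def by auto
  have finI: "finite ind" unfolding ind_def using fin_indep[OF sg] .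
  have emp: "{} \<in> ind" unfolding ind_def indep_sets_def by auto
  have Z_def2: "Z = (\<Sum>I\<in>ind. lam ^ card I)" unfolding Z_def Zhc_def ind_def ..
  have "lam ^ card ({}::'a set) \<le> Z"
    unfolding Z_def2 by (rule member_le_sum[OF emp]) (use lam finI in auto)
  then have Zpos: "Z > 0" by simp
  have pdef: "hc_prob V E lam I = lam ^ card I / Z" for I unfolding hc_prob_def Z_def ..
  have edef: "hc_expect V E lam f = (\<Sum>I\<in>ind. lam ^ card I / Z * f I)" for f
    unfolding hc_expect_def ind_def pdef ..
  have psum: "(\<Sum>I\<in>ind. lam ^ card I / Z) = 1"
    using Zpos unfolding Z_def2 by (simp add: sum_divide_distrib[symmetric])
  have pnn: "lam ^ card I / Z \<ge> 0" for I using lam Zpos by simp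
  define P where "P = (\<lambda>v. hc_expect V E lam (\<lambda>I. if v \<in> I then 1 else 0))"
  define Y where "Y = (\<lambda>v. hc_expect V E lam (\<lambda>I. real (card (ext_uncovered V E I v))))"
  have partI: "P v \<ge> lam / (1 + lam) * (1 + lam) powr (- Y v)" if v: "v \<in> V" for v
  proof -
    define N where "N = nbhd V E v"
    define x where "x = (\<lambda>I. real (card (ext_uncovered V E I v)))"
    define a where "a = (\<Sum>I\<in>{I\<in>ind. v \<in> I}. lam ^ card I)"
    define c where "c = (\<Sum>I\<in>{I\<in>ind. v \<notin> I \<and> I \<inter> N = {}}. lam ^ card I)"
    have hP: "P v = a / Z"
    proof -
      have "a = (\<Sum>I\<in>ind. if v \<in> I then lam ^ card I else 0)"
        unfolding a_def by (rule sum.inter_filter[OF finI])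
      then have "a / Z = (\<Sum>I\<in>ind. (if v \<in> I then lam ^ card I else 0) / Z)"
        by (simp add: sum_divide_distrib)
      also have "\<dots> = P v" unfolding P_def edef by (rule sum.cong) auto
      finally show ?thesis by simp
    qed
    have setsplit: "{I\<in>ind. I \<inter> N = {}} = {I\<in>ind. v \<in> I} \<union> {I\<in>ind. v \<notin> I \<and> I \<inter> N = {}}"
      unfolding ind_def indep_sets_def N_def nbhd_def by blast
    have hsplit: "(\<Sum>I\<in>{I\<in>ind. I \<inter> N = {}}. lam ^ card I) = a + c"
      unfolding setsplit a_def c_def by (rule sum.union_disjoint) (use finI in auto)
    have hac: "a = lam * c" unfolding a_def c_def ind_def N_def by (rule insert_v_sum[OF sg v])
    have key: "(\<Sum>I\<in>ind. lam ^ card I * b powr (- x I)) \<le> a + c"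
      using key_ineq[OF sg lam, of v] hsplit unfolding ind_def x_def b_def N_def by simp
    have jen: "(\<Sum>I\<in>ind. lam ^ card I / Z * b powr (- x I)) \<ge> b powr (- (\<Sum>I\<in>ind. lam ^ card I / Z * x I))"
      by (rule jensen_powr[OF finI pnn psum b1(2)])
    have Yv: "Y v = (\<Sum>I\<in>ind. lam ^ card I / Z * x I)" unfolding Y_def edef x_def ..
    have "(\<Sum>I\<in>ind. lam ^ card I / Z * b powr (- x I)) = (\<Sum>I\<in>ind. lam ^ card I * b powr (- x I)) / Z"
      by (simp add: sum_divide_distrib)
    also have "\<dots> \<le> (a + c) / Z" using key Zpos by (simp add: divide_right_mono)
    finally have "b powr (- Y v) \<le> (a + c) / Z" using jen Yv by simp
    then have "lam / (1 + lam) * b powr (- Y v) \<le> lam / (1 + lam) * ((a + c) / Z)"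
      by (rule mult_left_mono) (use lam in auto)
    also have "lam / (1 + lam) * ((a + c) / Z) = a / Z"
    proof -
      have l1: "1 + lam \<noteq> 0" using lam by simp
      have "a + c = (1 + lam) * c" using hac by (simp add: algebra_simps)
      then show ?thesis using l1 hac by simp
    qed
    finally show ?thesis using hP b_def by simp
  qed
  have Yle: "Y v \<le> real (card (nbhd V E v))" for v
  proof -
    have finN: "finite (nbhd V E v)" using sgd unfolding nbhd_def by auto
    have "Y v \<le> (\<Sum>I\<in>ind. lam ^ card I / Z * real (card (nbhd V E v)))"
      unfolding Y_def edef
    proof (rule sum_mono)
      fix I assume "I \<in> ind"
      have "card (ext_uncovered V E I v) \<le> card (nbhd V E v)"
        by (rule card_mono[OF finN]) (auto simp: ext_uncovered_def)
      then show "lam ^ card I / Z * real (card (ext_uncovered V E I v)) \<le> lam ^ card I / Z * real (card (nbhd V E v))"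
        by (intro mult_left_mono) (use pnn[of I] in auto)
    qed
    also have "\<dots> = (\<Sum>I\<in>ind. lam ^ card I / Z) * real (card (nbhd V E v))"
      by (rule sum_distrib_right[symmetric])
    also have "\<dots> = real (card (nbhd V E v))" using psum by simp
    finally show ?thesis .
  qed
  have EI: "hc_expect V E lam (\<lambda>I. real (card I)) = (\<Sum>v\<in>V. P v)"
  proof -
    have cI: "real (card I) = (\<Sum>v\<in>V. if v \<in> I then 1 else 0)" if "I \<in> ind" for I
    proof -
      have "I \<subseteq> V" using that unfolding ind_def indep_sets_def by auto
      then have "{v\<in>V. v \<in> I} = I" by auto
      then show ?thesis using sum.inter_filter[OF sgd(1), of "\<lambda>_. (1::real)" "\<lambda>v. v \<in> I"] by simp
    qed
    have "hc_expect V E lam (\<lambda>I. real (card I)) = (\<Sum>I\<in>ind. \<Sum>v\<in>V. lam ^ card I / Z * (if v \<in> I then 1 else 0))"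
      unfolding edef by (rule sum.cong) (simp_all add: cI sum_distrib_left)
    also have "\<dots> = (\<Sum>v\<in>V. \<Sum>I\<in>ind. lam ^ card I / Z * (if v \<in> I then 1 else 0))"
      by (rule sum.swap)
    also have "\<dots> = (\<Sum>v\<in>V. P v)" unfolding P_def edef ..
    finally show ?thesis .
  qed
  define n where "n = real (card V)"
  have npos: "n > 0" using sgd(1) assms(2) unfolding n_def by (simp add: card_gt_0_iff)
  have "(\<Sum>v\<in>V. P v) \<ge> (\<Sum>v\<in>V. lam / (1 + lam) * b powr (- Y v))"
    by (rule sum_mono) (use partI b_def in auto)
  also have "(\<Sum>v\<in>V. lam / (1 + lam) * b powr (- Y v)) = lam / (1 + lam) * n * (\<Sum>v\<in>V. (1 / n) * b powr (- Y v))"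
    using npos by (simp add: sum_distrib_left)
  finally have s1: "(\<Sum>v\<in>V. P v) \<ge> lam / (1 + lam) * n * (\<Sum>v\<in>V. (1 / n) * b powr (- Y v))" .
  have psumV: "(\<Sum>v\<in>V. 1 / n) = 1" using npos unfolding n_def by simp
  have jen2: "(\<Sum>v\<in>V. (1 / n) * b powr (- Y v)) \<ge> b powr (- (\<Sum>v\<in>V. (1 / n) * Y v))"
    by (rule jensen_powr[OF sgd(1) _ psumV b1(2)]) (use npos in simp)
  have "(\<Sum>v\<in>V. (1 / n) * Y v) \<le> (\<Sum>v\<in>V. (1 / n) * real (card (nbhd V E v)))"
    by (rule sum_mono) (use Yle npos in \<open>simp add: divide_right_mono\<close>)
  also have "\<dots> = real (\<Sum>v\<in>V. card (nbhd V E v)) / n" by (simp add: sum_divide_distrib)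
  also have "\<dots> \<le> 2 * real (card (edge_set V E)) / n"
  proof (rule divide_right_mono)
    have "real (\<Sum>v\<in>V. card (nbhd V E v)) \<le> real (2 * card (edge_set V E))"
      using handshake[OF sg] by (rule of_nat_mono)
    then show "real (\<Sum>v\<in>V. card (nbhd V E v)) \<le> 2 * real (card (edge_set V E))" by simp
  qed (use npos in simp)
  finally have "b powr (- (\<Sum>v\<in>V. (1 / n) * Y v)) \<ge> b powr (- (2 * real (card (edge_set V E)) / n))"
    using b1 by (intro powr_mono) auto
  with jen2 have "(\<Sum>v\<in>V. (1 / n) * b powr (- Y v)) \<ge> b powr (- (2 * real (card (edge_set V E)) / n))"
    by linarith
  then have "lam / (1 + lam) * n * (\<Sum>v\<in>V. (1 / n) * b powr (- Y v)) \<ge> lam / (1 + lam) * n * b powr (- (2 * real (card (edge_set V E)) / n))"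
    using lam npos by (intro mult_left_mono) auto
  with s1 EI have part2: "hc_expect V E lam (\<lambda>I. real (card I)) \<ge> lam / (1 + lam) * n * b powr (- (2 * real (card (edge_set V E)) / n))"
    by linarith
  show ?thesis using partI part2 unfolding P_def Y_def n_def b_def by auto
qed

end
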